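(* For real $x>0$, let $$W_0(x)=\sum_{\substack{n\geqslant 1\\ \lfloor x/n\rfloor=\lfloor x/(n+1)\rfloor}}\bigl\lvert \{x/(n+1)\}-\{x/n\}\bigr\rvert .$$ Then, for $x>0$, $$W_0(x)=\frac 23\sqrt{x}+O(1),$$ with an absolute implied constant.
   Context: For a real number $t$, $\lfloor t\rfloor$ denotes its integer part and $\{t\}=t-\lfloor t\rfloor$ its fractional part. *)

theory Defs
  imports Complex_Main
begin

definition W0_term :: "real \<Rightarrow> nat \<Rightarrow> real" where
  "W0_term x n =
     (if n \<ge> 1 \<and> \<lfloor>x / real n\<rfloor> = \<lfloor>x / real (n + 1)\<rfloor>
      then \<bar>frac (x / real (n + 1)) - frac (x / real n)\<bar> else 0)"

definition W0 :: "real \<Rightarrow> real" where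
  "W0 x = (\<Sum>n. W0_term x n)"

end

theory Submission
  imports Defs
begin

lemma term_key:
  fixes x :: real and n :: nat
  assumes x: "x > 0" and n: "n \<ge> 1" and lt: "x < real n * real (n+1)"
  shows "W0_term x n = x/(real n*real(n+1)) - (x/(real n*real(n+1)))^2
          + x/(real n*real(n+1)) * (frac (x/real n) - frac (x/real (n+1)))"
proof -
  define a where "a = x/(real n*real(n+1))"
  have npos: "real n > 0" using n by simp
  have ha: "x/real n - x/real(n+1) = a" unfolding a_def using npos by (simp add: field_simps)
  have a0: "a > 0" unfolding a_def using x npos by simp
  have a1: "a < 1" unfolding a_def using lt npos by (simp add: divide_less_eq)
  have le1: "\<lfloor>x/real(n+1)\<rfloor> \<le> \<lfloor>x/real n\<rfloor>"
    by (rule floor_mono) (use x npos in \<open>simp add: frac_def divide_left_mono\<close>)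
  have "\<lfloor>x/real n\<rfloor> \<le> \<lfloor>x/real(n+1) + 1\<rfloor>"
    by (rule floor_mono) (use ha a1 in linarith)
  hence le2: "\<lfloor>x/real n\<rfloor> \<le> \<lfloor>x/real(n+1)\<rfloor> + 1" by simp
  show ?thesis
  proof (cases "\<lfloor>x/real n\<rfloor> = \<lfloor>x/real(n+1)\<rfloor>")
    case True
    have "frac (x/real n) - frac (x/real (n+1)) = a" using True ha by (simp add: frac_def)
    moreover have "W0_term x n = a" unfolding W0_term_def using True n ha a0
      by (simp add: frac_def a_def[symmetric] abs_if)
    ultimately show ?thesis unfolding a_def[symmetric] by (simp add: power2_eq_square)
  next
    case False
    hence eq: "\<lfloor>x/real n\<rfloor> = \<lfloor>x/real(n+1)\<rfloor> + 1" using le1 le2 by linarith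
    have d: "frac (x/real n) - frac (x/real (n+1)) = a - 1" using eq ha by (simp add: frac_def)
    have w: "W0_term x n = 0" unfolding W0_term_def using False by simp
    show ?thesis unfolding a_def[symmetric] d w by (simp add: power2_eq_square algebra_simps)
  qed
qed

lemma term_vanish:
  fixes x :: real and n :: nat
  assumes x: "x > 0" and le: "real n * real (n+1) \<le> x"
  shows "W0_term x n = 0"
proof (cases "n \<ge> 1")
  case False thus ?thesis by (simp add: W0_term_def)
next
  case True
  have npos: "real n > 0" using True by simp
  have ha: "x/real n - x/real(n+1) = x/(real n*real(n+1))" using npos by (simp add: field_simps)
  have "1 \<le> x/(real n*real(n+1))" using le npos by (simp add: le_divide_eq)
  hence "\<lfloor>x/real(n+1) + 1\<rfloor> \<le> \<lfloor>x/real n\<rfloor>" using ha by (intro floor_mono) linarith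
  thus ?thesis unfolding W0_term_def by simp
qed

lemma term_bounds:
  fixes x :: real and n :: nat
  assumes x: "x > 0"
  shows "0 \<le> W0_term x n \<and> W0_term x n \<le> 1"
proof (cases "real n * real (n+1) \<le> x")
  case True thus ?thesis using term_vanish[OF x True] by simp
next
  case False
  have "\<bar>frac (x / real (n + 1)) - frac (x / real n)\<bar> \<le> 1"
    using frac_lt_1[of "x / real (n + 1)"] frac_lt_1[of "x / real n"]
      frac_ge_0[of "x / real (n + 1)"] frac_ge_0[of "x / real n"] by linarith
  thus ?thesis unfolding W0_term_def by simp
qed

lemma lim_shift0:
  fixes c :: real and N :: nat
  shows "(\<lambda>i. c / real (i + N)) \<longlonglongrightarrow> 0"
  using LIMSEQ_ignore_initial_segment[OF lim_const_over_n[of c], of N] by simp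

lemma lim0_bound:
  fixes h :: "nat \<Rightarrow> real"
  assumes "\<And>i. 0 \<le> h i" "\<And>i. h i \<le> c / real (i + N)"
  shows "h \<longlonglongrightarrow> 0"
  by (rule tendsto_sandwich[of "\<lambda>_. 0" h sequentially "\<lambda>i. c / real (i + N)"])
     (use assms lim_shift0 in auto)

lemma sq_upper:
  fixes m :: real assumes "m > 0"
  shows "1/(m^2*(m+1)^2) \<le> 1/(3*m^3) - 1/(3*(m+1)^3)"
proof -
  have e1: "1/(3*m^3) - 1/(3*(m+1)^3) = (3*m^2+3*m+1)/(3*m^3*(m+1)^3)"
    using assms by (simp add: field_simps) algebra
  have e2: "1/(m^2*(m+1)^2) = (3*m^2+3*m)/(3*m^3*(m+1)^3)"
    using assms by (simp add: field_simps) algebra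
  show ?thesis unfolding e1 e2 using assms by (intro divide_right_mono) auto
qed

lemma sq_lower:
  fixes m :: real assumes "m > 0"
  shows "1/(3*(m+1)^3) - 1/(3*(m+2)^3) \<le> 1/(m^2*(m+1)^2)"
proof -
  have "1/(3*(m+1)^3) - 1/(3*(m+2)^3) = (3*(m+1)^2+3*(m+1)+1)/(3*(m+1)^3*(m+2)^3)"
    using assms by (simp add: field_simps) algebra
  also have "\<dots> \<le> 1/(m^2*(m+1)^2)"
    using assms by (simp add: divide_simps) (simp add: power2_eq_square power3_eq_cube algebra_simps)
  finally show ?thesis .
qed

lemma main:
  fixes x :: real
  assumes x: "x > 0"
  shows "\<exists>S. W0_term x sums S \<and> \<bar>S - 2/3 * sqrt x\<bar> \<le> 5"
proof -
  define s where "s = sqrt x"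
  define m where "m = nat \<lfloor>s\<rfloor>"
  define N where "N = Suc m"
  have s0: "s > 0" unfolding s_def using x by simp
  have ss: "s * s = x" unfolding s_def using x by simp
  have ms: "real m \<le> s" unfolding m_def using s0 by linarith
  have Ns: "real N > s" unfolding N_def m_def using s0 by linarith
  have Ns1: "real N \<le> s + 1" unfolding N_def using ms by simp
  have N1: "N \<ge> 1" unfolding N_def by simp
  define A where "A i = x / (real (i+N) * real (i+N+1))" for i
  define th where "th i = frac (x / real (i+N))" for i
  define B where "B i = (A i)^2" for i
  define D where "D i = A i * (th i - th (Suc i))" for i
  have posi: "real (i+N) > 0" for i using N1 by simp
  have A0: "A i \<ge> 0" for i unfolding A_def using x by simp
  have hu: "W0_term x (i+N) = A i - B i + D i" for i
  proof -
    have "s * s < real (i+N) * real (i+N+1)"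
      using Ns s0 by (intro mult_strict_mono) auto
    hence "x < real (i+N) * real (i+N+1)" using ss by simp
    from term_key[OF x _ this] N1 show ?thesis
      unfolding A_def B_def D_def th_def by (simp add: add.commute add.left_commute)
  qed
  have Atel: "x / real (i+N) - x / real (Suc i + N) = A i" for i
    unfolding A_def using posi[of i] by (simp add: field_simps)
  have hA: "A sums (x / real N)"
  proof -
    have "(\<lambda>i. x / real (i+N) - x / real (Suc i + N)) sums (x / real (0+N) - 0)"
      by (rule telescope_sums') (rule lim_shift0)
    thus ?thesis using Atel by simp
  qed
  have Ale: "A i \<le> x / real (i+N)" for i
    unfolding A_def using posi[of i] x by (simp add: divide_simps)
  have Alim: "A \<longlonglongrightarrow> 0" by (rule lim0_bound[OF A0 Ale])
  have Adec: "A (Suc i) \<le> A i" for i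
    unfolding A_def using posi[of i] x by (intro divide_left_mono mult_mono) auto
  have AN: "A 0 < 1"
  proof -
    have "s * s < real N * real (N+1)" using Ns s0 by (intro mult_strict_mono) auto
    thus ?thesis unfolding A_def using ss posi[of 0] by (simp add: divide_less_eq)
  qed
  define g where "g i = x^2 / (3 * real (i+N)^3)" for i
  define G where "G i = x^2 / (3 * (real (i+N) + 1)^3)" for i
  have Bg: "B i \<le> g i - g (Suc i)" for i
  proof -
    have "x^2 * (1/(real (i+N)^2*(real (i+N)+1)^2)) \<le> x^2 * (1/(3*real (i+N)^3) - 1/(3*(real (i+N)+1)^3))"
      by (intro mult_left_mono sq_upper posi) auto
    thus ?thesis unfolding B_def A_def g_def by (simp add: power_divide power_mult_distrib right_diff_distrib ac_simps)
  qed
  have BG: "G i - G (Suc i) \<le> B i" for i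
  proof -
    define r where "r = real (i+N)"
    have r0: "r > 0" unfolding r_def using posi by simp
    have "x^2 * (1/(3*(r+1)^3) - 1/(3*(r+2)^3)) \<le> x^2 * (1/(r^2*(r+1)^2))"
      by (intro mult_left_mono sq_lower r0) auto
    moreover have "G i = x^2 * (1/(3*(r+1)^3))" unfolding G_def r_def by simp
    moreover have "G (Suc i) = x^2 * (1/(3*(r+2)^3))"
    proof -
      have e: "real (Suc i + N) + 1 = r + 2" unfolding r_def by simp
      show ?thesis unfolding G_def e by simp
    qed
    moreover have "B i = x^2 * (1/(r^2*(r+1)^2))" unfolding B_def A_def r_def
      by (simp add: power_divide power_mult_distrib)
    ultimately show ?thesis by (simp add: right_diff_distrib)
  qed
  have B0: "B i \<ge> 0" for i unfolding B_def by simp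
  have glim: "g \<longlonglongrightarrow> 0"
  proof (rule lim0_bound[where c="x^2/3"])
    fix i
    show "0 \<le> g i" unfolding g_def by simp
    have "real (i+N) \<le> real (i+N)^3"
    proof -
      have "1 \<le> real (i+N)" using N1 by simp
      thus ?thesis by (metis power_one_right power_increasing one_le_numeral numeral_One)
    qed
    thus "g i \<le> x^2/3 / real (i+N)" unfolding g_def using posi[of i]
      by (simp add: divide_simps) (use x in \<open>simp add: mult_left_mono\<close>)
  qed
  have Glim: "G \<longlonglongrightarrow> 0"
  proof (rule lim0_bound[where c="x^2/3"])
    fix i
    show "0 \<le> G i" unfolding G_def using posi[of i] by simp
    have "real (i+N) \<le> (real (i+N)+1)^3"
    proof -
      have "1 \<le> real (i+N) + 1" by simp
      hence "real (i+N) + 1 \<le> (real (i+N)+1)^3"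
        by (metis power_one_right power_increasing one_le_numeral numeral_One)
      thus ?thesis by simp
    qed
    thus "G i \<le> x^2/3 / real (i+N)" unfolding G_def using posi[of i]
      by (simp add: divide_simps) (use x in \<open>simp add: mult_left_mono\<close>)
  qed
  have gs: "(\<lambda>i. g i - g (Suc i)) sums (g 0)" using telescope_sums'[OF glim] by simp
  have Gs: "(\<lambda>i. G i - G (Suc i)) sums (G 0)" using telescope_sums'[OF Glim] by simp
  have Bsum: "summable B"
    by (rule summable_comparison_test'[OF sums_summable[OF gs]]) (use B0 Bg in auto)
  have Bup: "suminf B \<le> g 0"
    using suminf_le[OF Bg Bsum sums_summable[OF gs]] sums_unique[OF gs] by simp
  have Blo: "G 0 \<le> suminf B"
    using suminf_le[OF BG sums_summable[OF Gs] Bsum] sums_unique[OF Gs] by simp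
  define P where "P i = A i * th i" for i
  define c where "c i = (A i - A (Suc i)) * th (Suc i)" for i
  have th01: "0 \<le> th i \<and> th i < 1" for i unfolding th_def using frac_lt_1 by simp
  have DPc: "D i = (P i - P (Suc i)) - c i" for i
    unfolding D_def P_def c_def by (simp add: algebra_simps)
  have Plim: "P \<longlonglongrightarrow> 0"
  proof (rule lim0_bound[where c=x and N=N])
    fix i
    show "0 \<le> P i" unfolding P_def using A0 th01 by simp
    have "P i \<le> A i" unfolding P_def using A0[of i] th01[of i]
      by (simp add: mult_left_le)
    thus "P i \<le> x / real (i+N)" using Ale[of i] by simp
  qed
  have Ps: "(\<lambda>i. P i - P (Suc i)) sums (P 0)" using telescope_sums'[OF Plim] by simp
  have Ads: "(\<lambda>i. A i - A (Suc i)) sums (A 0)" using telescope_sums'[OF Alim] by simp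
  have c0: "0 \<le> c i" for i unfolding c_def using Adec[of i] th01[of "Suc i"] by simp
  have cle: "c i \<le> A i - A (Suc i)" for i unfolding c_def using Adec[of i] th01[of "Suc i"]
    by (simp add: mult_left_le)
  have csum: "summable c"
    by (rule summable_comparison_test'[OF sums_summable[OF Ads]]) (use c0 cle in auto)
  have cup: "suminf c \<le> A 0"
    using suminf_le[OF cle csum sums_summable[OF Ads]] sums_unique[OF Ads] by simp
  have clo: "0 \<le> suminf c" using suminf_nonneg[OF csum c0] .
  have Ds: "D sums (P 0 - suminf c)"
  proof -
    have "D = (\<lambda>n. P n - P (Suc n) - c n)" using DPc by (simp add: fun_eq_iff)
    thus ?thesis using sums_diff[OF Ps summable_sums[OF csum]] by simp
  qed
  have P0: "0 \<le> P 0 \<and> P 0 \<le> A 0" unfolding P_def using A0[of 0] th01[of 0]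
    by (simp add: mult_left_le)
  define S0 where "S0 = x / real N - suminf B + (P 0 - suminf c)"
  have us: "(\<lambda>i. W0_term x (i+N)) sums S0"
    unfolding hu S0_def by (intro sums_add sums_diff hA summable_sums Bsum Ds)
  define T where "T = (\<Sum>i<N. W0_term x i)"
  have Ws: "W0_term x sums (S0 + T)" using us unfolding T_def by (simp add: sums_iff_shift)
  have T0: "(\<Sum>i<m. W0_term x i) = 0"
  proof (rule sum.neutral, intro ballI)
    fix n assume "n \<in> {..<m}"
    hence "real n + 1 \<le> real m" by simp
    hence "real n * real (n+1) \<le> s * s" using ms
      by (intro mult_mono) auto
    thus "W0_term x n = 0" using term_vanish[OF x] ss by simp
  qed
  have Tb: "0 \<le> T \<and> T \<le> 1" unfolding T_def N_def using T0 term_bounds[OF x, of m] by simp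
  have e1: "x / real N \<le> s"
  proof -
    have "s * s \<le> s * real N" using Ns s0 by (intro mult_left_mono) auto
    thus ?thesis using ss posi[of 0] by (simp add: divide_le_eq mult.commute)
  qed
  have e2: "s - 1 \<le> x / real N"
  proof -
    have "(s - 1) * real N \<le> x"
    proof (cases "s < 1")
      case True
      hence "(s - 1) * real N \<le> 0" using posi[of 0] by (intro mult_nonpos_nonneg) auto
      thus ?thesis using x by linarith
    next
      case False
      hence "(s - 1) * real N \<le> (s - 1) * (s + 1)" using Ns1 by (intro mult_left_mono) auto
      also have "\<dots> = x - 1" using ss by (simp add: algebra_simps)
      finally show ?thesis by linarith
    qed
    thus ?thesis using posi[of 0] by (simp add: le_divide_eq)
  qed
  have e3: "g 0 \<le> s / 3"
  proof -
    have "s^3 \<le> real N ^3" using Ns s0 by (intro power_mono) auto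
    hence "x^2 / (3 * real N^3) \<le> x^2 / (3 * s^3)" using s0 by (intro divide_left_mono) auto
    also have "x^2 / (3 * s^3) = s / 3" using s0 ss[symmetric]
      by (simp add: power2_eq_square power3_eq_cube)
    finally show ?thesis unfolding g_def by simp
  qed
  have e4: "s / 3 - 2 \<le> G 0"
  proof -
    have "(real N + 1)^3 \<le> (s+2)^3" using Ns1 posi[of 0] by (intro power_mono) auto
    hence "s^4 / (3 * (s+2)^3) \<le> s^4 / (3 * (real N + 1)^3)" using s0 posi[of 0]
      by (intro divide_left_mono mult_pos_pos) auto
    moreover have "s / 3 - 2 \<le> s^4 / (3 * (s+2)^3)"
    proof -
      have p: "(s+2)^3 > 0" using s0 by simp
      have "(s/3 - 2) * (3*(s+2)^3) \<le> s^4"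
        by (simp add: power2_eq_square power3_eq_cube power4_eq_xxxx algebra_simps)
          (use s0 in \<open>smt (verit) mult_pos_pos\<close>)
      thus ?thesis using p by (simp add: le_divide_eq)
    qed
    moreover have "x^2 = s^4" using ss[symmetric] by (simp add: power2_eq_square power4_eq_xxxx)
    ultimately show ?thesis unfolding G_def by simp
  qed
  show ?thesis
  proof (intro exI conjI)
    show "W0_term x sums (S0 + T)" by (rule Ws)
    show "\<bar>S0 + T - 2/3 * sqrt x\<bar> \<le> 5"
      unfolding S0_def s_def[symmetric] using Tb e1 e2 e3 e4 Bup Blo P0 cup clo AN by linarith
  qed
qed

theorem proposition1:
  shows "\<exists>C. \<forall>x::real. x > 0 \<longrightarrow>
           summable (W0_term x) \<and> \<bar>W0 x - 2 / 3 * sqrt x\<bar> \<le> C"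
proof (intro exI allI impI)
  fix x :: real assume x: "x > 0"
  from main[OF x] obtain S where S: "W0_term x sums S" "\<bar>S - 2/3 * sqrt x\<bar> \<le> 5" by blast
  show "summable (W0_term x) \<and> \<bar>W0 x - 2 / 3 * sqrt x\<bar> \<le> 5"
    using S sums_summable[OF S(1)] sums_unique[OF S(1)] unfolding W0_def by simp
qed

end
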